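(* Let $B_+=\{x\in\mathbb{R}^N:|x|\le1,\ x_N>0\}$, $\Sigma_1=\{x\in\partial B_+: x_N=0\}$, $\Sigma_2=\{x\in\partial B_+: x_N>0\}$, and let $\nu$ be the outward unit normal on $\Sigma_2$. Suppose $w\in C^2(\overline{B_+})$ satisfies $$-\Delta w\ge0\ \text{on }B_+,\qquad w=0\ \text{on }\Sigma_1,\qquad \frac{\partial w}{\partial\nu}=0\ \text{on }\Sigma_2.$$ If $w\not\equiv0$ in $B_+$, then $w>0$ in $B_+$ and $\frac{\partial w}{\partial x_N}>0$ on $\Sigma_1$. *)

theory Defs
  imports "HOL-Analysis.Analysis"
begin

text \<open>Points of R^N are vectors of type real^'n; the distinguished coordinate
  x_N is the coordinate k (an arbitrary but fixed index).\<close>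

definition Bplus :: "'n::finite \<Rightarrow> (real^'n) set" where
  "Bplus k = {x. norm x \<le> 1 \<and> x $ k > 0}"

definition Sigma1 :: "'n::finite \<Rightarrow> (real^'n) set" where
  "Sigma1 k = {x \<in> frontier (Bplus k). x $ k = 0}"

definition Sigma2 :: "'n::finite \<Rightarrow> (real^'n) set" where
  "Sigma2 k = {x \<in> frontier (Bplus k). x $ k > 0}"

definition outward_normal :: "real^'n::finite \<Rightarrow> real^'n" where
  "outward_normal x = x /\<^sub>R norm x"

definition dir_deriv :: "(real^'n::finite \<Rightarrow> real) \<Rightarrow> real^'n \<Rightarrow> real^'n \<Rightarrow> real" where
  "dir_deriv f v x = deriv (\<lambda>t. f (x + t *\<^sub>R v)) 0"

definition pd :: "'n::finite \<Rightarrow> (real^'n \<Rightarrow> real) \<Rightarrow> real^'n \<Rightarrow> real" where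
  "pd i f x = dir_deriv f (axis i 1) x"

definition C2_on :: "(real^'n::finite) set \<Rightarrow> (real^'n \<Rightarrow> real) \<Rightarrow> bool" where
  "C2_on U f \<longleftrightarrow>
     continuous_on U f \<and>
     (\<forall>i. \<forall>x\<in>U. (\<lambda>t. f (x + t *\<^sub>R axis i 1)) differentiable (at 0)) \<and>
     (\<forall>i. continuous_on U (pd i f)) \<and>
     (\<forall>i j. \<forall>x\<in>U. (\<lambda>t. pd i f (x + t *\<^sub>R axis j 1)) differentiable (at 0)) \<and>
     (\<forall>i j. continuous_on U (pd j (pd i f)))"

definition laplacian :: "(real^'n::finite \<Rightarrow> real) \<Rightarrow> real^'n \<Rightarrow> real" where
  "laplacian f x = (\<Sum>i\<in>UNIV. pd i (pd i f) x)"

end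

theory Submission imports Defs begin

lemma second_deriv_min:
  fixes g g' :: "real \<Rightarrow> real"
  assumes d0: "\<delta> > 0" and dg: "\<And>t. \<bar>t\<bar> < \<delta> \<Longrightarrow> (g has_real_derivative g' t) (at t)"
    and dg': "(g' has_real_derivative D) (at 0)" and mn: "\<And>t. \<bar>t\<bar> < \<delta> \<Longrightarrow> g 0 \<le> g t"
  shows "0 \<le> D"
proof (rule ccontr)
  assume "\<not> 0 \<le> D" hence D: "D < 0" by simp
  have g0: "g' 0 = 0"
    by (rule DERIV_local_min[OF dg[of 0] d0]) (use d0 mn in auto)
  obtain d where d: "d > 0" "\<forall>h>0. h < d \<longrightarrow> g' 0 > g' (0 + h)"
    using DERIV_neg_dec_right[OF dg' D] by blast
  define t where "t = min d \<delta> / 2"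
  have t: "0 < t" "t < d" "t < \<delta>" using d d0 by (auto simp: t_def)
  obtain z where z: "0 < z" "z < t" "g t - g 0 = (t - 0) * g' z"
    using MVT2[of 0 t g g'] t dg by force
  have "g' z < 0" using d z t g0 by force
  hence "t * g' z < 0" using t by (simp add: mult_pos_neg)
  hence "g t < g 0" using z by simp
  thus False using mn[of t] t by simp
qed

lemma left_min:
  fixes g :: "real \<Rightarrow> real"
  assumes "(g has_real_derivative D) (at 0)" "\<delta> > 0" "\<And>t. -\<delta> < t \<Longrightarrow> t \<le> 0 \<Longrightarrow> g 0 \<le> g t"
  shows "D \<le> 0"
proof (rule ccontr)
  assume "\<not> D \<le> 0"
  then obtain d where d: "d>0" "\<forall>h>0. h < d \<longrightarrow> g (0 - h) < g 0"
    using DERIV_pos_inc_left[OF assms(1)] by force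
  define h where "h = min d \<delta> / 2"
  have "g (0 - h) < g 0" using d assms(2) by (simp add: h_def)
  moreover have "g 0 \<le> g (0 - h)" using assms(2,3) d by (simp add: h_def)
  ultimately show False by simp
qed

lemma right_min:
  fixes g :: "real \<Rightarrow> real"
  assumes "(g has_real_derivative D) (at 0)" "\<delta> > 0" "\<And>t. 0 \<le> t \<Longrightarrow> t < \<delta> \<Longrightarrow> g 0 \<le> g t"
  shows "0 \<le> D"
proof (rule ccontr)
  assume "\<not> 0 \<le> D"
  then obtain d where d: "d>0" "\<forall>h>0. h < d \<longrightarrow> g 0 > g (0 + h)"
    using DERIV_neg_dec_right[OF assms(1)] by force
  define h where "h = min d \<delta> / 2"
  have "g (0 + h) < g 0" using d assms(2) by (simp add: h_def)
  moreover have "g 0 \<le> g (0 + h)" using assms(2,3) d by (simp add: h_def)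
  ultimately show False by simp
qed

lemma mvt_bound:
  fixes g g' :: "real \<Rightarrow> real"
  assumes dg: "\<And>t. \<bar>t\<bar> \<le> \<bar>b\<bar> \<Longrightarrow> (g has_real_derivative g' t) (at t)"
    and bd: "\<And>t. \<bar>t\<bar> \<le> \<bar>b\<bar> \<Longrightarrow> \<bar>g' t - c\<bar> \<le> E"
  shows "\<bar>g b - g 0 - c * b\<bar> \<le> E * \<bar>b\<bar>"
proof (cases "b = 0")
  case True thus ?thesis by simp
next
  case False
  show ?thesis
  proof (cases "b > 0")
    case True
    obtain z where z: "0 < z" "z < b" "g b - g 0 = (b - 0) * g' z"
      using MVT2[of 0 b g g'] True dg by force
    have "g b - g 0 - c * b = b * (g' z - c)" using z by (simp add: algebra_simps)
    hence "\<bar>g b - g 0 - c * b\<bar> = \<bar>b\<bar> * \<bar>g' z - c\<bar>" by (simp add: abs_mult)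
    also have "\<dots> \<le> \<bar>b\<bar> * E" using bd[of z] z by (intro mult_left_mono) auto
    finally show ?thesis by (simp add: mult.commute)
  next
    case False
    hence b: "b < 0" using \<open>b \<noteq> 0\<close> by simp
    obtain z where z: "b < z" "z < 0" "g 0 - g b = (0 - b) * g' z"
      using MVT2[of b 0 g g'] b dg by force
    have "g b - g 0 - c * b = b * (g' z - c)" using z by (simp add: algebra_simps)
    hence "\<bar>g b - g 0 - c * b\<bar> = \<bar>b\<bar> * \<bar>g' z - c\<bar>" by (simp add: abs_mult)
    also have "\<dots> \<le> \<bar>b\<bar> * E" using bd[of z] z by (intro mult_left_mono) auto
    finally show ?thesis by (simp add: mult.commute)
  qed
qed

lemma slice1:
  assumes "C2_on U w" "x \<in> U"
  shows "((\<lambda>t. w (x + t *\<^sub>R axis i 1)) has_real_derivative pd i w x) (at 0)"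
  using assms unfolding C2_on_def pd_def dir_deriv_def
  by (simp add: DERIV_deriv_iff_real_differentiable)

lemma slice1_at:
  assumes "C2_on U w" "x + t *\<^sub>R axis i 1 \<in> U"
  shows "((\<lambda>s. w (x + s *\<^sub>R axis i 1)) has_real_derivative pd i w (x + t *\<^sub>R axis i 1)) (at t)"
proof -
  have "((\<lambda>s. w (x + t *\<^sub>R axis i 1 + s *\<^sub>R axis i 1)) has_real_derivative pd i w (x + t *\<^sub>R axis i 1)) (at 0)"
    by (rule slice1[OF assms])
  moreover have "(\<lambda>s. w (x + t *\<^sub>R axis i 1 + s *\<^sub>R axis i 1)) = (\<lambda>s. w (x + (s + t) *\<^sub>R axis i 1))"
    by (simp add: algebra_simps scaleR_add_left)
  ultimately show ?thesis
    using DERIV_shift[of "\<lambda>s. w (x + s *\<^sub>R axis i 1)" "pd i w (x + t *\<^sub>R axis i 1)" 0 t] by simp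
qed

lemma slice2:
  assumes "C2_on U w" "x \<in> U"
  shows "((\<lambda>t. pd i w (x + t *\<^sub>R axis i 1)) has_real_derivative pd i (pd i w) x) (at 0)"
proof -
  have "(\<lambda>t. pd i w (x + t *\<^sub>R axis i 1)) differentiable (at 0)"
    using assms unfolding C2_on_def by blast
  thus ?thesis unfolding pd_def[of i "pd i w"] dir_deriv_def
    by (simp add: DERIV_deriv_iff_real_differentiable)
qed


lemma sum_axis_component:
  fixes h :: "real^'n"
  shows "(\<Sum>i\<in>S. h$i *\<^sub>R axis i (1::real)) $ l = (if finite S \<and> l \<in> S then h$l else 0)"
proof (cases "finite S")
  case True
  have "(\<Sum>i\<in>S. h$i *\<^sub>R axis i (1::real)) $ l = (\<Sum>i\<in>S. (h$i *\<^sub>R axis i (1::real)) $ l)"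
    by (rule sum_component)
  also have "\<dots> = (\<Sum>i\<in>S. if i = l then h$l else 0)"
    by (rule sum.cong) (auto simp: axis_def)
  finally show ?thesis using True by (simp add: sum.delta)
qed simp

lemma partials_diff:
  fixes w :: "real^'n \<Rightarrow> real"
  assumes C2: "C2_on U w" and U: "open U" "x \<in> U"
  shows "(w has_derivative (\<lambda>h. \<Sum>i\<in>UNIV. pd i w x * h$i)) (at x)"
proof -
  obtain \<delta>0 where \<delta>0: "\<delta>0>0" "ball x \<delta>0 \<subseteq> U" using U open_contains_ball by blast
  have cont: "\<And>i. isCont (pd i w) x" using C2 U unfolding C2_on_def
    by (meson continuous_on_eq_continuous_at)
  show ?thesis unfolding has_derivative_at_alt
  proof (intro conjI allI impI)
    have "(\<lambda>h. \<Sum>i\<in>UNIV. pd i w x * h$i) = (\<lambda>h. (\<chi> i. pd i w x) \<bullet> h)"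
      by (simp add: inner_vec_def)
    thus "bounded_linear (\<lambda>h. \<Sum>i\<in>UNIV. pd i w x * h$i)"
      using bounded_linear_inner_right by simp
  next
    fix e :: real assume e: "e > 0"
    define N where "N = real CARD('n)"
    have N: "N > 0" by (simp add: N_def)
    define e' where "e' = e / N"
    have e': "e' > 0" using e N by (simp add: e'_def)
    have "\<forall>\<^sub>F z in at x. \<forall>i. dist (pd i w z) (pd i w x) < e'"
      using cont e' by (intro eventually_all_finite) (simp add: isCont_def tendsto_iff)
    then obtain \<eta> where \<eta>: "\<eta> > 0" "\<And>z. z \<noteq> x \<Longrightarrow> dist z x < \<eta> \<Longrightarrow> \<forall>i. dist (pd i w z) (pd i w x) < e'"
      unfolding eventually_at by blast
    define d where "d = min \<eta> \<delta>0"
    have d: "d > 0" using \<eta> \<delta>0 by (simp add: d_def)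
    have bnd: "\<And>z i. norm (z - x) < d \<Longrightarrow> z \<in> U \<and> \<bar>pd i w z - pd i w x\<bar> \<le> e'"
    proof -
      fix z i assume z: "norm (z - x) < d"
      hence "z \<in> ball x \<delta>0" by (simp add: d_def dist_norm norm_minus_commute)
      hence "z \<in> U" using \<delta>0 by blast
      moreover have "\<bar>pd i w z - pd i w x\<bar> \<le> e'"
      proof (cases "z = x")
        case True thus ?thesis using e' by simp
      next
        case False thus ?thesis using \<eta>(2)[of z] z
          by (auto simp: d_def dist_norm dist_real_def intro: less_imp_le)
      qed
      ultimately show "z \<in> U \<and> \<bar>pd i w z - pd i w x\<bar> \<le> e'" by blast
    qed
    have main: "\<forall>h. norm h < d \<longrightarrow>
        \<bar>w (x + (\<Sum>i\<in>S. h$i *\<^sub>R axis i 1)) - w x - (\<Sum>i\<in>S. pd i w x * h$i)\<bar> \<le> e' * (\<Sum>i\<in>S. \<bar>h$i\<bar>)"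
      if "finite S" for S
      using that
    proof (induction S rule: finite_induct)
      case empty thus ?case by simp
    next
      case (insert j S)
      show ?case
      proof (intro allI impI)
      fix h :: "real^'n" assume h: "norm h < d"
      define z where "z = x + (\<Sum>i\<in>S. h$i *\<^sub>R axis i 1)"
      have near: "norm (z + t *\<^sub>R axis j 1 - x) < d" if t: "\<bar>t\<bar> \<le> \<bar>h$j\<bar>" for t
      proof -
        have "norm (z + t *\<^sub>R axis j 1 - x) \<le> norm h"
        proof (rule norm_le_componentwise_cart)
          fix l
          have "(z + t *\<^sub>R axis j 1 - x) $ l = (\<Sum>i\<in>S. h$i *\<^sub>R axis i (1::real))$l + t * (axis j (1::real))$l"
            by (simp add: z_def)
          also have "\<dots> = (if l \<in> S then h$l else 0) + (if l = j then t else 0)"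
            using insert.hyps by (simp only: sum_axis_component) (simp add: axis_def)
          finally have "(z + t *\<^sub>R axis j 1 - x) $ l = (if l \<in> S then h$l else 0) + (if l = j then t else 0)" .
          thus "norm ((z + t *\<^sub>R axis j 1 - x) $ l) \<le> norm (h $ l)"
            using insert.hyps t by auto
        qed
        thus ?thesis using h by simp
      qed
      have step: "\<bar>w (z + h$j *\<^sub>R axis j 1) - w z - pd j w x * h$j\<bar> \<le> e' * \<bar>h$j\<bar>"
      proof (rule mvt_bound[where g = "\<lambda>t. w (z + t *\<^sub>R axis j 1)" and g' = "\<lambda>t. pd j w (z + t *\<^sub>R axis j 1)", simplified])
        fix t :: real assume t: "\<bar>t\<bar> \<le> \<bar>h$j\<bar>"
        have "z + t *\<^sub>R axis j 1 - x = (z + t *\<^sub>R axis j 1) - x" by simp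
        from bnd[OF near[OF t]] 
        show "((\<lambda>t. w (z + t *\<^sub>R axis j 1)) has_real_derivative pd j w (z + t *\<^sub>R axis j 1)) (at t)"
          using slice1_at[OF C2] by blast
        from bnd[OF near[OF t]] show "\<bar>pd j w (z + t *\<^sub>R axis j 1) - pd j w x\<bar> \<le> e'" by blast
      qed
      have IH: "\<bar>w z - w x - (\<Sum>i\<in>S. pd i w x * h$i)\<bar> \<le> e' * (\<Sum>i\<in>S. \<bar>h$i\<bar>)"
        using insert.IH h by (simp add: z_def)
      have eq: "w (x + (h$j *\<^sub>R axis j 1 + (\<Sum>i\<in>S. h$i *\<^sub>R axis i 1))) = w (z + h$j *\<^sub>R axis j 1)"
        by (simp add: z_def algebra_simps)
      have "\<bar>w (z + h$j *\<^sub>R axis j 1) - w x - (pd j w x * h$j + (\<Sum>i\<in>S. pd i w x * h$i))\<bar>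
          \<le> e' * \<bar>h$j\<bar> + e' * (\<Sum>i\<in>S. \<bar>h$i\<bar>)"
        using step IH by linarith
      thus "\<bar>w (x + (\<Sum>i\<in>insert j S. h$i *\<^sub>R axis i 1)) - w x - (\<Sum>i\<in>insert j S. pd i w x * h$i)\<bar> \<le> e' * (\<Sum>i\<in>insert j S. \<bar>h$i\<bar>)"
        using insert.hyps eq by (simp add: distrib_left)
      qed
    qed
    show "\<exists>d>0. \<forall>y. norm (y - x) < d \<longrightarrow>
            norm (w y - w x - (\<Sum>i\<in>UNIV. pd i w x * (y - x) $ i)) \<le> e * norm (y - x)"
    proof (intro exI[of _ d] conjI allI impI d)
      fix y assume y: "norm (y - x) < d"
      define h where "h = y - x"
      have hs: "(\<Sum>i\<in>UNIV. h$i *\<^sub>R axis i (1::real)) = h"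
        using basis_expansion[of h] by (simp add: scalar_mult_eq_scaleR)
      have "\<bar>w y - w x - (\<Sum>i\<in>UNIV. pd i w x * h $ i)\<bar> \<le> e' * (\<Sum>i\<in>UNIV. \<bar>h$i\<bar>)"
        using spec[OF main[of UNIV], of h] y hs by (simp add: h_def[symmetric], simp add: h_def)
      also have "\<dots> \<le> e' * (\<Sum>i\<in>(UNIV::'n set). norm h)"
        using e' by (intro mult_left_mono sum_mono component_le_norm_cart) auto
      also have "\<dots> = e * norm h" using N by (simp add: e'_def N_def)
      finally show "norm (w y - w x - (\<Sum>i\<in>UNIV. pd i w x * (y - x) $ i)) \<le> e * norm (y - x)"
        by (simp add: h_def)
    qed
  qed
qed

lemma slice_dir:
  fixes w :: "real^'n \<Rightarrow> real"
  assumes C2: "C2_on U w" and U: "open U" "x \<in> U"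
  shows "((\<lambda>t. w (x + t *\<^sub>R d)) has_real_derivative (\<Sum>i\<in>UNIV. pd i w x * d$i)) (at 0)"
proof -
  have l: "((\<lambda>t. x + t *\<^sub>R d) has_derivative (\<lambda>t. t *\<^sub>R d)) (at 0)"
    by (auto intro!: derivative_eq_intros)
  have "((\<lambda>t. w (x + t *\<^sub>R d)) has_derivative (\<lambda>t. \<Sum>i\<in>UNIV. pd i w x * (t *\<^sub>R d)$i)) (at 0)"
  proof -
    have "(w has_derivative (\<lambda>h. \<Sum>i\<in>UNIV. pd i w x * h$i)) (at ((\<lambda>t. x + t *\<^sub>R d) 0))"
      using partials_diff[OF assms] by simp
    from has_derivative_compose[OF l this] show ?thesis by simp
  qed
  moreover have "(\<lambda>t. \<Sum>i\<in>UNIV. pd i w x * (t *\<^sub>R d)$i) = (*) (\<Sum>i\<in>UNIV. pd i w x * d$i)"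
    by (rule ext) (simp add: sum_distrib_left algebra_simps)
  ultimately show ?thesis unfolding has_field_derivative_def by simp
qed


lemma closure_Bplus:
  fixes k :: "'n::finite"
  shows "closure (Bplus k) = {x. norm x \<le> 1 \<and> 0 \<le> x$k}"
proof
  have cl: "closed {x::real^'n. norm x \<le> 1 \<and> 0 \<le> x$k}"
    by (intro closed_Collect_conj closed_Collect_le continuous_intros)
  show "closure (Bplus k) \<subseteq> {x. norm x \<le> 1 \<and> 0 \<le> x$k}"
    by (rule closure_minimal[OF _ cl]) (auto simp: Bplus_def)
next
  show "{x. norm x \<le> 1 \<and> 0 \<le> x$k} \<subseteq> closure (Bplus k)"
  proof
    fix x :: "real^'n" assume x: "x \<in> {x. norm x \<le> 1 \<and> 0 \<le> x$k}"
    show "x \<in> closure (Bplus k)" unfolding closure_approachable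
    proof (intro allI impI)
      fix e :: real assume e: "e > 0"
      define t where "t = min 1 (e/3)"
      have t: "0 < t" "t \<le> 1" "t < e/2" using e by (auto simp: t_def)
      define y where "y = (1 - t) *\<^sub>R x + t *\<^sub>R axis k 1"
      have "norm y \<le> (1 - t) * norm x + t"
        unfolding y_def using norm_triangle_ineq[of "(1 - t) *\<^sub>R x" "t *\<^sub>R axis k 1"] t by simp
      also have "\<dots> \<le> 1"
      proof -
        have "(1 - t) * norm x \<le> (1 - t) * 1" using x t by (intro mult_left_mono) auto
        thus ?thesis by simp
      qed
      finally have ny: "norm y \<le> 1" .
      have "y$k = (1 - t) * x$k + t" by (simp add: y_def)
      moreover have "(1 - t) * x$k \<ge> 0" using x t by simp
      ultimately have yk: "y$k > 0" using t by simp
      have "y - x = t *\<^sub>R (axis k 1 - x)" by (simp add: y_def algebra_simps)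
      hence "dist y x = t * norm (axis k 1 - x)" using t by (simp add: dist_norm)
      also have "\<dots> \<le> t * 2"
        using norm_triangle_ineq4[of "axis k (1::real)" x] x t by (intro mult_left_mono) auto
      also have "\<dots> < e" using t by simp
      finally show "\<exists>y\<in>Bplus k. dist y x < e" using ny yk by (auto simp: Bplus_def)
    qed
  qed
qed

lemma Sigma1_eq: "Sigma1 k = {x. norm x \<le> 1 \<and> x$k = 0}"
proof -
  have "interior (Bplus k) \<subseteq> Bplus k" by (rule interior_subset)
  thus ?thesis unfolding Sigma1_def frontier_def closure_Bplus
    by (auto simp: Bplus_def)
qed

lemma Sigma2_mem:
  assumes "norm x = 1" "x$k > 0"
  shows "x \<in> Sigma2 k"
proof -
  have "x \<notin> interior (Bplus k)"
  proof
    assume "x \<in> interior (Bplus k)"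
    then obtain e where e: "e > 0" "ball x e \<subseteq> Bplus k" by (auto simp: mem_interior)
    have "x + (e/2) *\<^sub>R x \<in> ball x e" using e assms by (simp add: dist_norm)
    hence "norm (x + (e/2) *\<^sub>R x) \<le> 1" using e by (auto simp: Bplus_def)
    moreover have "x + (e/2) *\<^sub>R x = (1 + e/2) *\<^sub>R x" by (simp add: algebra_simps)
    ultimately show False using e assms by simp
  qed
  thus ?thesis unfolding Sigma2_def frontier_def closure_Bplus using assms by auto
qed

lemma comparison:
  fixes w \<phi> :: "real^'n \<Rightarrow> real" and k :: 'n and S :: "(real^'n) set"
  assumes U: "open U" "{x. norm x \<le> 1 \<and> 0 \<le> x$k} \<subseteq> U" and C2: "C2_on U w"
   and lap: "\<And>x. norm x < 1 \<Longrightarrow> x$k > 0 \<Longrightarrow> laplacian w x \<le> 0"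
   and neu: "\<And>x. norm x = 1 \<Longrightarrow> x$k > 0 \<Longrightarrow> ((\<lambda>t. w (x + t *\<^sub>R x)) has_real_derivative 0) (at 0)"
   and S: "closed S" and cont\<phi>: "continuous_on UNIV \<phi>"
   and bnd: "\<And>x. norm x \<le> 1 \<Longrightarrow> 0 \<le> x$k \<Longrightarrow> x \<in> S \<Longrightarrow> x$k = 0 \<or> x \<notin> interior S \<Longrightarrow> \<phi> x \<le> w x"
   and int: "\<And>x. norm x < 1 \<Longrightarrow> x$k > 0 \<Longrightarrow> x \<in> interior S \<Longrightarrow>
      \<exists>\<phi>1 \<phi>2. (\<forall>i t. ((\<lambda>s. \<phi> (x + s *\<^sub>R axis i 1)) has_real_derivative \<phi>1 i t) (at t)) \<and>
          (\<forall>i. (\<phi>1 i has_real_derivative \<phi>2 i) (at 0)) \<and> (\<Sum>i\<in>UNIV. \<phi>2 i) > 0"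
   and sph: "\<And>x. norm x = 1 \<Longrightarrow> x$k > 0 \<Longrightarrow> x \<in> interior S \<Longrightarrow>
      \<exists>d<0. ((\<lambda>t. \<phi> (x + t *\<^sub>R x)) has_real_derivative d) (at 0)"
   and x: "norm x \<le> 1" "0 \<le> x$k" "x \<in> S"
  shows "\<phi> x \<le> w x"
proof -
  define K where "K = {x. norm x \<le> 1 \<and> 0 \<le> x$k} \<inter> S"
  have cl: "closed {x::real^'n. norm x \<le> 1 \<and> 0 \<le> x$k}"
    by (intro closed_Collect_conj closed_Collect_le continuous_intros)
  have "compact K" unfolding K_def compact_eq_bounded_closed
  proof (intro conjI)
    show "bounded ({x. norm x \<le> 1 \<and> 0 \<le> x $ k} \<inter> S)"
      by (rule bounded_subset[OF bounded_cball[of 0 1]]) auto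
    show "closed ({x. norm x \<le> 1 \<and> 0 \<le> x $ k} \<inter> S)" using cl S by auto
  qed
  moreover have "K \<noteq> {}" using x by (auto simp: K_def)
  moreover have "continuous_on K (\<lambda>x. w x - \<phi> x)"
  proof (intro continuous_intros)
    show "continuous_on K w"
      using C2 U unfolding C2_on_def K_def by (meson continuous_on_subset inf.coboundedI1)
    show "continuous_on K \<phi>" using cont\<phi> by (rule continuous_on_subset) simp
  qed
  ultimately obtain x0 where x0: "x0 \<in> K" "\<And>y. y \<in> K \<Longrightarrow> w x0 - \<phi> x0 \<le> w y - \<phi> y"
    using continuous_attains_inf[of K "\<lambda>x. w x - \<phi> x"] by blast
  have "0 \<le> w x0 - \<phi> x0"
  proof (rule ccontr)
    assume neg: "\<not> 0 \<le> w x0 - \<phi> x0"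
    have x0C: "norm x0 \<le> 1" "0 \<le> x0$k" "x0 \<in> S" using x0 by (auto simp: K_def)
    have x0k: "x0$k > 0" and x0S: "x0 \<in> interior S"
      using bnd[OF x0C] neg x0C(2) by force+
    show False
    proof (cases "norm x0 < 1")
      case True
      obtain \<epsilon>0 where \<epsilon>0: "\<epsilon>0 > 0" "ball x0 \<epsilon>0 \<subseteq> S" using x0S by (auto simp: mem_interior)
      define \<epsilon> where "\<epsilon> = min \<epsilon>0 (min (1 - norm x0) (x0$k))"
      have \<epsilon>: "\<epsilon> > 0" using \<epsilon>0 True x0k by (simp add: \<epsilon>_def)
      have inK: "x0 + v \<in> K" if v: "norm v < \<epsilon>" for v
      proof -
        have "norm (x0 + v) \<le> norm x0 + norm v" by (rule norm_triangle_ineq)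
        hence "norm (x0 + v) \<le> 1" using v by (simp add: \<epsilon>_def)
        moreover have "\<bar>v$k\<bar> \<le> norm v" by (rule component_le_norm_cart)
        hence "0 \<le> (x0 + v)$k" using v by (auto simp: \<epsilon>_def abs_le_iff)
        moreover have "x0 + v \<in> ball x0 \<epsilon>0" using v by (simp add: dist_norm \<epsilon>_def)
        ultimately show ?thesis using \<epsilon>0 by (auto simp: K_def)
      qed
      have inU: "x0 + v \<in> U" if "norm v < \<epsilon>" for v using inK[OF that] U by (auto simp: K_def)
      obtain \<phi>1 \<phi>2 where \<phi>: "\<And>i t. ((\<lambda>s. \<phi> (x0 + s *\<^sub>R axis i 1)) has_real_derivative \<phi>1 i t) (at t)"
         "\<And>i. (\<phi>1 i has_real_derivative \<phi>2 i) (at 0)" "(\<Sum>i\<in>UNIV. \<phi>2 i) > 0"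
        using int[OF True x0k x0S] by blast
      have each: "0 \<le> pd i (pd i w) x0 - \<phi>2 i" for i
      proof (rule second_deriv_min[where g = "\<lambda>t. w (x0 + t *\<^sub>R axis i 1) - \<phi> (x0 + t *\<^sub>R axis i 1)"
            and g' = "\<lambda>t. pd i w (x0 + t *\<^sub>R axis i 1) - \<phi>1 i t", OF \<epsilon>])
        fix t :: real assume t: "\<bar>t\<bar> < \<epsilon>"
        hence tU: "x0 + t *\<^sub>R axis i 1 \<in> U" using inU[of "t *\<^sub>R axis i 1"] by simp
        show "((\<lambda>t. w (x0 + t *\<^sub>R axis i 1) - \<phi> (x0 + t *\<^sub>R axis i 1)) has_real_derivative
           pd i w (x0 + t *\<^sub>R axis i 1) - \<phi>1 i t) (at t)"
          by (intro DERIV_diff slice1_at[OF C2 tU] \<phi>(1))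
        show "w (x0 + 0 *\<^sub>R axis i 1) - \<phi> (x0 + 0 *\<^sub>R axis i 1) \<le> w (x0 + t *\<^sub>R axis i 1) - \<phi> (x0 + t *\<^sub>R axis i 1)"
          using x0(2)[OF inK[of "t *\<^sub>R axis i 1"]] t by simp
      next
        have x0U: "x0 \<in> U" using inU[of 0] \<epsilon> by simp
        show "((\<lambda>t. pd i w (x0 + t *\<^sub>R axis i 1) - \<phi>1 i t) has_real_derivative pd i (pd i w) x0 - \<phi>2 i) (at 0)"
          by (intro DERIV_diff slice2[OF C2 x0U] \<phi>(2))
      qed
      have "0 \<le> (\<Sum>i\<in>UNIV. pd i (pd i w) x0 - \<phi>2 i)" by (rule sum_nonneg) (use each in auto)
      hence "(\<Sum>i\<in>UNIV. \<phi>2 i) \<le> laplacian w x0" by (simp add: laplacian_def sum_subtractf)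
      thus False using lap[OF True x0k] \<phi>(3) by simp
    next
      case False
      hence n1: "norm x0 = 1" using x0C by simp
      obtain d where d: "d < 0" "((\<lambda>t. \<phi> (x0 + t *\<^sub>R x0)) has_real_derivative d) (at 0)"
        using sph[OF n1 x0k x0S] by blast
      obtain \<epsilon>0 where \<epsilon>0: "\<epsilon>0 > 0" "ball x0 \<epsilon>0 \<subseteq> S" using x0S by (auto simp: mem_interior)
      have "0 - d \<le> 0"
      proof (rule left_min[where g = "\<lambda>t. w (x0 + t *\<^sub>R x0) - \<phi> (x0 + t *\<^sub>R x0)" and \<delta> = "min \<epsilon>0 1"])
        show "((\<lambda>t. w (x0 + t *\<^sub>R x0) - \<phi> (x0 + t *\<^sub>R x0)) has_real_derivative 0 - d) (at 0)"
          by (intro DERIV_diff neu[OF n1 x0k] d(2))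
        show "0 < min \<epsilon>0 1" using \<epsilon>0 by simp
        fix t :: real assume t: "- min \<epsilon>0 1 < t" "t \<le> 0"
        have eq: "x0 + t *\<^sub>R x0 = (1 + t) *\<^sub>R x0" by (simp add: algebra_simps)
        have "norm (x0 + t *\<^sub>R x0) \<le> 1" using t n1 unfolding eq by simp
        moreover have "0 \<le> (x0 + t *\<^sub>R x0)$k" using t x0k unfolding eq by simp
        moreover have "x0 + t *\<^sub>R x0 \<in> ball x0 \<epsilon>0" using t n1 by (simp add: dist_norm)
        ultimately have "x0 + t *\<^sub>R x0 \<in> K" using \<epsilon>0 by (auto simp: K_def)
        from x0(2)[OF this]
        show "w (x0 + 0 *\<^sub>R x0) - \<phi> (x0 + 0 *\<^sub>R x0) \<le> w (x0 + t *\<^sub>R x0) - \<phi> (x0 + t *\<^sub>R x0)" by simp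
      qed
      thus False using d by simp
    qed
  qed
  moreover have "x \<in> K" using x by (auto simp: K_def)
  ultimately show ?thesis using x0(2) by force
qed


lemma bar1d_1:
  fixes A c Q a b \<beta> t :: real
  shows "((\<lambda>s. (A + s * c) * exp(-\<beta>*(Q + 2*a * s + b * s^2))) has_real_derivative
     exp(-\<beta>*(Q + 2*a*t + b*t^2)) * (c - \<beta>*(A + t*c)*(2*a + 2*b*t))) (at t)"
  by (auto intro!: derivative_eq_intros simp: algebra_simps power2_eq_square)

lemma bar1d_2:
  fixes A c Q a b \<beta> :: real
  shows "((\<lambda>t. exp(-\<beta>*(Q + 2*a*t + b*t^2)) * (c - \<beta>*(A + t*c)*(2*a + 2*b*t))) has_real_derivative
     exp(-\<beta>*Q) * (4*\<beta>^2*A*a^2 - 4*\<beta>*a*c - 2*\<beta>*A*b)) (at 0)"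
  by (auto intro!: derivative_eq_intros simp: algebra_simps power2_eq_square)

lemma norm_line_sq:
  fixes u d :: "real^'n"
  shows "norm (u + s *\<^sub>R d)^2 = norm u^2 + 2*(u \<bullet> d) * s + (norm d)^2 * s^2"
  by (simp only: power2_norm_eq_inner) (simp add: inner_add_left inner_add_right inner_commute algebra_simps power2_eq_square)

lemma expslice1:
  fixes \<epsilon> a c t :: real
  shows "((\<lambda>s. \<epsilon>*(exp(-(a + s * c)) - 1)) has_real_derivative \<epsilon>*(-c)*exp(-(a + t*c))) (at t)"
  by (auto intro!: derivative_eq_intros simp: algebra_simps)

lemma expslice2:
  fixes \<epsilon> a c :: real
  shows "((\<lambda>t. \<epsilon>*(-c)*exp(-(a + t*c))) has_real_derivative \<epsilon>*c^2*exp(-a)) (at 0)"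
  by (auto intro!: derivative_eq_intros simp: algebra_simps power2_eq_square)

lemma cont_pos:
  fixes f :: "real^'n \<Rightarrow> real"
  assumes "isCont f z" "f z > 0"
  shows "\<exists>\<eta>>0. \<forall>x. dist x z < \<eta> \<longrightarrow> f x > f z / 2"
proof -
  have tl: "(f \<longlongrightarrow> f z) (at z)" using assms isCont_def by blast
  have "\<forall>\<^sub>F x in at z. dist (f x) (f z) < f z / 2"
    using tendsto_iff[THEN iffD1, OF tl, rule_format, of "f z / 2"] assms(2) by simp
  then obtain \<eta> where \<eta>: "\<eta> > 0" "\<And>x. x \<noteq> z \<Longrightarrow> dist x z < \<eta> \<Longrightarrow> dist (f x) (f z) < f z / 2"
    unfolding eventually_at by blast
  show ?thesis
  proof (intro exI[of _ \<eta>] conjI allI impI \<eta>(1))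
    fix x assume "dist x z < \<eta>"
    thus "f x > f z / 2"
    proof (cases "x = z")
      case False
      hence "\<bar>f x - f z\<bar> < f z / 2" using \<eta>(2)[of x] \<open>dist x z < \<eta>\<close> by (simp add: dist_real_def)
      thus ?thesis by linarith
    qed (use assms(2) in simp)
  qed
qed


lemma axis_comp: "axis i (1::real) $ k = (if i = k then 1 else 0)"
  by (auto simp: axis_def)

lemma sum_axis_mult: "(\<Sum>i\<in>UNIV. f i * axis i (1::real) $ k) = (f k :: real)"
  by (simp add: axis_comp if_distrib sum.delta' cong: if_cong)

lemma norm_sq_sum: "norm (u::real^'n)^2 = (\<Sum>i\<in>UNIV. (u$i)^2)"
  unfolding power2_norm_eq_inner by (simp add: inner_vec_def power2_eq_square)

lemma stepA:
  fixes w :: "real^'n::finite \<Rightarrow> real" and k :: 'n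
  assumes U: "open U" "{x. norm x \<le> 1 \<and> 0 \<le> x$k} \<subseteq> U" and C2: "C2_on U w"
   and lap: "\<And>x. norm x < 1 \<Longrightarrow> x$k > 0 \<Longrightarrow> laplacian w x \<le> 0"
   and neu: "\<And>x. norm x = 1 \<Longrightarrow> x$k > 0 \<Longrightarrow> ((\<lambda>t. w (x + t *\<^sub>R x)) has_real_derivative 0) (at 0)"
   and zero: "\<And>x. norm x \<le> 1 \<Longrightarrow> x$k = 0 \<Longrightarrow> w x = 0"
   and x: "norm x \<le> 1" "0 \<le> x$k"
  shows "0 \<le> w x"
proof -
  have bound: "- \<epsilon> \<le> w x" if \<epsilon>: "\<epsilon> > 0" for \<epsilon>
  proof -
    let ?\<phi> = "\<lambda>x::real^'n. \<epsilon> * (exp (-(x$k)) - 1)"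
    have cl: "closed (UNIV :: (real^'n) set)" by simp
    have ct: "continuous_on UNIV ?\<phi>" by (intro continuous_intros)
    have bnd: "?\<phi> z \<le> w z" if "norm z \<le> 1" "0 \<le> z$k" "z \<in> UNIV" "z$k = 0 \<or> z \<notin> interior UNIV" for z
      using that zero by simp
    have int: "\<exists>\<phi>1 \<phi>2. (\<forall>i t. ((\<lambda>s. ?\<phi> (z + s *\<^sub>R axis i 1)) has_real_derivative \<phi>1 i t) (at t)) \<and>
          (\<forall>i. (\<phi>1 i has_real_derivative \<phi>2 i) (at 0)) \<and> (\<Sum>i\<in>UNIV. \<phi>2 i) > 0"
      if "norm z < 1" "z$k > 0" "z \<in> interior UNIV" for z
    proof (intro exI[of _ "\<lambda>i t. \<epsilon>*(-(axis i (1::real) $ k))*exp(-(z$k + t*(axis i (1::real) $ k)))"]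
        exI[of _ "\<lambda>i. \<epsilon>*(axis i (1::real) $ k)^2*exp(-(z$k))"] conjI allI)
      fix i t
      show "((\<lambda>s. ?\<phi> (z + s *\<^sub>R axis i 1)) has_real_derivative
          \<epsilon>*(-(axis i (1::real) $ k))*exp(-(z$k + t*(axis i (1::real) $ k)))) (at t)"
        using expslice1[of \<epsilon> "z$k" "axis i (1::real) $ k" t] by simp
    next
      fix i
      show "((\<lambda>t. \<epsilon>*(-(axis i (1::real) $ k))*exp(-(z$k + t*(axis i (1::real) $ k)))) has_real_derivative
          \<epsilon>*(axis i (1::real) $ k)^2*exp(-(z$k))) (at 0)"
        by (rule expslice2)
    next
      have "(\<Sum>i\<in>UNIV. \<epsilon>*(axis i (1::real) $ k)^2*exp(-(z$k))) = (\<Sum>i\<in>UNIV. (\<epsilon>*exp(-(z$k))) * axis i (1::real) $ k)"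
        by (rule sum.cong) (auto simp: axis_comp)
      also have "\<dots> = \<epsilon>*exp(-(z$k))" by (rule sum_axis_mult)
      finally show "(\<Sum>i\<in>UNIV. \<epsilon>*(axis i (1::real) $ k)^2*exp(-(z$k))) > 0" using \<epsilon> by simp
    qed
    have sph: "\<exists>d<0. ((\<lambda>t. ?\<phi> (z + t *\<^sub>R z)) has_real_derivative d) (at 0)"
      if z: "norm z = 1" "z$k > 0" "z \<in> interior UNIV" for z
    proof (intro exI[of _ "\<epsilon>*(-(z$k))*exp(-(z$k + 0*z$k))"] conjI)
      show "\<epsilon>*(-(z$k))*exp(-(z$k + 0*z$k)) < 0" using \<epsilon> z by (simp add: mult_pos_pos)
      show "((\<lambda>t. ?\<phi> (z + t *\<^sub>R z)) has_real_derivative \<epsilon>*(-(z$k))*exp(-(z$k + 0*z$k))) (at 0)"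
        using expslice1[of \<epsilon> "z$k" "z$k" 0] by simp
    qed
    have "?\<phi> x \<le> w x"
      by (rule comparison[OF U C2 lap neu cl ct bnd int sph x UNIV_I])
    moreover have "- \<epsilon> \<le> ?\<phi> x" using \<epsilon> by (simp add: algebra_simps)
    ultimately show ?thesis by linarith
  qed
  show ?thesis
  proof (rule ccontr)
    assume "\<not> 0 \<le> w x"
    thus False using bound[of "- w x / 2"] by linarith
  qed
qed


lemma stepB:
  fixes w :: "real^'n::finite \<Rightarrow> real" and k :: 'n
  assumes U: "open U" "{x. norm x \<le> 1 \<and> 0 \<le> x$k} \<subseteq> U" and C2: "C2_on U w"
   and lap: "\<And>x. norm x < 1 \<Longrightarrow> x$k > 0 \<Longrightarrow> laplacian w x \<le> 0"
   and neu: "\<And>x. norm x = 1 \<Longrightarrow> x$k > 0 \<Longrightarrow> ((\<lambda>t. w (x + t *\<^sub>R x)) has_real_derivative 0) (at 0)"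
   and zero: "\<And>x. norm x \<le> 1 \<Longrightarrow> x$k = 0 \<Longrightarrow> w x = 0"
   and y: "norm y < 1" "y$k > 0" and r: "r > 0"
   and cb: "\<And>z. dist y z \<le> r \<Longrightarrow> 2*m \<le> w z" and m: "m > 0"
   and \<beta>: "\<beta> > 0" "real CARD('n) + 2 \<le> 2*\<beta>*r^2" "1 \<le> \<beta>*(1 - norm y)"
   and x: "norm x \<le> 1" "0 \<le> x$k" "r \<le> dist y x"
  shows "m * (x$k * exp(-\<beta> * norm(x - y)^2)) \<le> w x"
proof -
  define h where "h = (\<lambda>x::real^'n. m * (x$k * exp(-\<beta> * norm(x - y)^2)))"
  define S where "S = - ball y r"
  have intS: "interior S = - cball y r" using r by (simp add: S_def interior_complement)
  have cl: "closed S" by (simp add: S_def closed_Compl)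
  have ct: "continuous_on UNIV h" unfolding h_def by (intro continuous_intros)
  have bnd: "h z \<le> w z" if z: "norm z \<le> 1" "0 \<le> z$k" "z \<in> S" "z$k = 0 \<or> z \<notin> interior S" for z
  proof (cases "z$k = 0")
    case True thus ?thesis using zero z by (simp add: h_def)
  next
    case False
    hence "dist y z \<le> r" using z intS by auto
    hence "2*m \<le> w z" by (rule cb)
    moreover have "z$k * exp(-\<beta> * norm(z - y)^2) \<le> 1"
    proof (rule mult_le_one)
      show "z$k \<le> 1" using component_le_norm_cart[of z k] z by simp
      show "exp(-\<beta> * norm(z - y)^2) \<le> 1" using \<beta> by simp
    qed (use z in auto)
    hence "h z \<le> m" using m by (simp add: h_def mult_left_le)
    ultimately show ?thesis using m by simp
  qed
  have int: "\<exists>\<phi>1 \<phi>2. (\<forall>i t. ((\<lambda>s. h (z + s *\<^sub>R axis i 1)) has_real_derivative \<phi>1 i t) (at t)) \<and>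
          (\<forall>i. (\<phi>1 i has_real_derivative \<phi>2 i) (at 0)) \<and> (\<Sum>i\<in>UNIV. \<phi>2 i) > 0"
    if z: "norm z < 1" "z$k > 0" "z \<in> interior S" for z
  proof -
    define Q where "Q = norm (z - y)^2"
    define A where "A = z$k"
    define a where "a = (\<lambda>i. (z - y)$i)"
    define c where "c = (\<lambda>i. axis i (1::real) $ k)"
    have sl: "h (z + s *\<^sub>R axis i 1) = m * ((A + s * c i) * exp(-\<beta>*(Q + 2*a i * s + 1 * s^2)))" for i s
    proof -
      have "norm (z + s *\<^sub>R axis i 1 - y)^2 = norm ((z - y) + s *\<^sub>R axis i 1)^2"
        by (simp add: algebra_simps)
      also have "\<dots> = Q + 2*a i * s + 1 * s^2"
        unfolding norm_line_sq by (simp add: Q_def a_def inner_axis)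
      finally show ?thesis by (simp add: h_def A_def c_def algebra_simps)
    qed
    show ?thesis
    proof (intro exI[of _ "\<lambda>i t. m * (exp(-\<beta>*(Q + 2*a i*t + 1*t^2)) * (c i - \<beta>*(A + t*c i)*(2*a i + 2*1*t)))"]
        exI[of _ "\<lambda>i. m * (exp(-\<beta>*Q) * (4*\<beta>^2*A*(a i)^2 - 4*\<beta>*a i*c i - 2*\<beta>*A*1))"] conjI allI)
      fix i t
      show "((\<lambda>s. h (z + s *\<^sub>R axis i 1)) has_real_derivative
         m * (exp(-\<beta>*(Q + 2*a i*t + 1*t^2)) * (c i - \<beta>*(A + t*c i)*(2*a i + 2*1*t)))) (at t)"
        unfolding sl by (intro DERIV_cmult bar1d_1)
    next
      fix i
      show "((\<lambda>t. m * (exp(-\<beta>*(Q + 2*a i*t + 1*t^2)) * (c i - \<beta>*(A + t*c i)*(2*a i + 2*1*t)))) has_real_derivative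
          m * (exp(-\<beta>*Q) * (4*\<beta>^2*A*(a i)^2 - 4*\<beta>*a i*c i - 2*\<beta>*A*1))) (at 0)"
        by (intro DERIV_cmult bar1d_2)
    next
      define N where "N = real CARD('n)"
      have sa: "(\<Sum>i\<in>UNIV. (a i)^2) = Q" by (simp add: Q_def a_def norm_sq_sum)
      have sc: "(\<Sum>i\<in>UNIV. a i * c i) = a k" unfolding c_def by (rule sum_axis_mult)
      have "(\<Sum>i\<in>UNIV. m * (exp(-\<beta>*Q) * (4*\<beta>^2*A*(a i)^2 - 4*\<beta>*a i*c i - 2*\<beta>*A*1)))
          = m * exp(-\<beta>*Q) * (4*\<beta>^2*A*(\<Sum>i\<in>UNIV. (a i)^2) - 4*\<beta>*(\<Sum>i\<in>UNIV. a i * c i) - 2*\<beta>*A*N)"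
        by (simp add: N_def sum_distrib_left sum_subtractf sum.distrib algebra_simps)
      also have "\<dots> = m * exp(-\<beta>*Q) * (2*\<beta>) * (A*(2*\<beta>*Q - 2 - N) + 2*y$k)"
        unfolding sa sc by (simp add: a_def A_def algebra_simps power2_eq_square)
      also have "\<dots> > 0"
      proof -
        have "dist y z > r" using z intS by auto
        hence "norm (z - y) > r" by (simp add: dist_norm norm_minus_commute)
        hence "Q > r^2" unfolding Q_def using r by (simp add: power_strict_mono)
        hence "2*\<beta>*Q \<ge> 2*\<beta>*r^2" using \<beta> by simp
        hence "2*\<beta>*Q - 2 - N \<ge> 0" using \<beta>(2) by (simp add: N_def)
        hence "A*(2*\<beta>*Q - 2 - N) \<ge> 0" using z by (simp add: A_def)
        hence "A*(2*\<beta>*Q - 2 - N) + 2*y$k > 0" using y by simp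
        thus ?thesis using m \<beta> by simp
      qed
      finally show "(\<Sum>i\<in>UNIV. m * (exp(-\<beta>*Q) * (4*\<beta>^2*A*(a i)^2 - 4*\<beta>*a i*c i - 2*\<beta>*A*1))) > 0" .
    qed
  qed
  have sph: "\<exists>d<0. ((\<lambda>t. h (z + t *\<^sub>R z)) has_real_derivative d) (at 0)"
    if z: "norm z = 1" "z$k > 0" "z \<in> interior S" for z
  proof -
    define Q where "Q = norm (z - y)^2"
    define a where "a = 1 - y \<bullet> z"
    have zz: "z \<bullet> z = 1" using z by (simp add: power2_norm_eq_inner[symmetric])
    have sl: "h (z + t *\<^sub>R z) = m * ((z$k + t * z$k) * exp(-\<beta>*(Q + 2*a * t + 1 * t^2)))" for t
    proof -
      have "norm (z + t *\<^sub>R z - y)^2 = norm ((z - y) + t *\<^sub>R z)^2"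
        by (simp add: algebra_simps)
      also have "\<dots> = Q + 2*a * t + 1 * t^2"
        unfolding norm_line_sq using z zz by (simp add: Q_def a_def inner_diff_left inner_diff_right inner_commute)
      finally show ?thesis by (simp add: h_def algebra_simps)
    qed
    have D: "((\<lambda>t. h (z + t *\<^sub>R z)) has_real_derivative
        m * (exp(-\<beta>*(Q + 2*a*0 + 1*0^2)) * (z$k - \<beta>*(z$k + 0*z$k)*(2*a + 2*1*0)))) (at 0)"
      unfolding sl by (intro DERIV_cmult bar1d_1)
    have "y \<bullet> z \<le> norm y * norm z" by (rule norm_cauchy_schwarz)
    hence "a \<ge> 1 - norm y" using z by (simp add: a_def)
    hence "\<beta> * a \<ge> 1" using \<beta> by (smt (verit) mult_left_mono)
    hence "z$k - \<beta>*(z$k + 0*z$k)*(2*a + 2*1*0) < 0"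
    proof -
      assume ba: "\<beta> * a \<ge> 1"
      have "z$k - \<beta>*(z$k + 0*z$k)*(2*a + 2*1*0) = z$k * (1 - 2*(\<beta>*a))" by (simp add: algebra_simps)
      also have "\<dots> < 0" using z ba by (simp add: mult_pos_neg)
      finally show ?thesis .
    qed
    hence "m * (exp(-\<beta>*(Q + 2*a*0 + 1*0^2)) * (z$k - \<beta>*(z$k + 0*z$k)*(2*a + 2*1*0))) < 0"
      using m by (simp add: mult_pos_neg)
    thus ?thesis using D by blast
  qed
  have xS: "x \<in> S" using x by (simp add: S_def)
  show ?thesis using comparison[OF U C2 lap neu cl ct bnd int sph x(1,2) xS] by (simp add: h_def)
qed


theorem lemma9p2:
  fixes w :: "real^'n::finite \<Rightarrow> real" and k :: 'n and U :: "(real^'n) set"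
  assumes "open U" and "closure (Bplus k) \<subseteq> U" and "C2_on U w"
    and "\<forall>x\<in>Bplus k. - laplacian w x \<ge> 0"
    and "\<forall>x\<in>Sigma1 k. w x = 0"
    and "\<forall>x\<in>Sigma2 k. dir_deriv w (outward_normal x) x = 0"
    and "\<exists>x\<in>Bplus k. w x \<noteq> 0"
  shows "(\<forall>x\<in>Bplus k. w x > 0) \<and> (\<forall>x\<in>Sigma1 k. pd k w x > 0)"
proof -
  note U = assms(1)
  have CU: "{x. norm x \<le> 1 \<and> 0 \<le> x$k} \<subseteq> U" using assms(2) by (simp add: closure_Bplus)
  note C2 = assms(3)
  have lap: "\<And>x. norm x < 1 \<Longrightarrow> x$k > 0 \<Longrightarrow> laplacian w x \<le> 0"
    using assms(4) by (auto simp: Bplus_def)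
  have zero: "\<And>x. norm x \<le> 1 \<Longrightarrow> x$k = 0 \<Longrightarrow> w x = 0" using assms(5) by (simp add: Sigma1_eq)
  have neu: "((\<lambda>t. w (x + t *\<^sub>R x)) has_real_derivative 0) (at 0)" if x: "norm x = 1" "x$k > 0" for x
  proof -
    have xU: "x \<in> U" using x CU by auto
    have D: "((\<lambda>t. w (x + t *\<^sub>R x)) has_real_derivative (\<Sum>i\<in>UNIV. pd i w x * x$i)) (at 0)"
      by (rule slice_dir[OF C2 U xU])
    have "dir_deriv w (outward_normal x) x = 0" using assms(6) Sigma2_mem[OF x] by blast
    hence "deriv (\<lambda>t. w (x + t *\<^sub>R x)) 0 = 0" using x by (simp add: dir_deriv_def outward_normal_def)
    thus ?thesis using DERIV_imp_deriv[OF D] D by simp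
  qed
  have nonneg: "\<And>x. norm x \<le> 1 \<Longrightarrow> 0 \<le> x$k \<Longrightarrow> 0 \<le> w x"
    by (rule stepA[OF U CU C2 lap neu zero])
  have isc: "\<And>z. z \<in> U \<Longrightarrow> isCont w z"
    using C2 U by (simp add: C2_on_def continuous_on_eq_continuous_at)
  obtain y0 where y0: "y0 \<in> Bplus k" "w y0 \<noteq> 0" using assms(7) by blast
  have y0C: "norm y0 \<le> 1" "y0$k > 0" using y0 by (auto simp: Bplus_def)
  have wy0: "w y0 > 0" using nonneg[of y0] y0C y0 by force
  obtain \<eta> where \<eta>: "\<eta> > 0" "\<forall>x. dist x y0 < \<eta> \<longrightarrow> w x > w y0 / 2"
    using cont_pos[OF isc wy0] y0C CU by force
  define s where "s = min (1/2) (\<eta>/2)"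
  have s: "0 < s" "s < 1" "s < \<eta>" using \<eta> by (auto simp: s_def)
  define y where "y = (1 - s) *\<^sub>R y0"
  have ny: "norm y < 1"
  proof -
    have "norm y = (1 - s) * norm y0" using s by (simp add: y_def)
    also have "\<dots> \<le> (1 - s) * 1" using y0C s by (intro mult_left_mono) auto
    finally show ?thesis using s by simp
  qed
  have yk: "y$k > 0" using y0C s by (simp add: y_def)
  have "dist y y0 = s * norm y0"
  proof -
    have "y - y0 = (-s) *\<^sub>R y0" by (simp add: y_def algebra_simps)
    thus ?thesis using s by (simp add: dist_norm)
  qed
  also have "\<dots> \<le> s * 1" using y0C s by (intro mult_left_mono) auto
  finally have "dist y y0 < \<eta>" using s by simp
  hence wy: "w y > 0" using \<eta> wy0 by force
  have yU: "y \<in> U" using CU ny yk by auto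
  obtain \<eta>' where \<eta>': "\<eta>' > 0" "\<forall>x. dist x y < \<eta>' \<longrightarrow> w x > w y / 2"
    using cont_pos[OF isc[OF yU] wy] by blast
  define r where "r = min (\<eta>'/2) (min ((1 - norm y)/2) (y$k/2))"
  have r3: "r \<le> (1 - norm y)/2" unfolding r_def by (meson min.cobounded1 min.coboundedI2)
  have r4: "r \<le> y$k/2" unfolding r_def by (meson min.cobounded2 min.coboundedI2)
  have r5: "r \<le> \<eta>'/2" unfolding r_def by (meson min.cobounded1)
  have r: "r > 0" "r < \<eta>'" "r \<le> (1 - norm y)/2" "r \<le> y$k/2" using \<eta>' ny yk r3 r4 r5
    by (auto simp: r_def)
  define m where "m = w y / 4"
  have m: "m > 0" using wy by (simp add: m_def)
  have cb: "2*m \<le> w z" if "dist y z \<le> r" for z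
    using \<eta>'(2)[rule_format, of z] that r by (simp add: m_def dist_commute)
  define N where "N = real CARD('n)"
  define \<beta> where "\<beta> = (N + 2)/r^2 + 1/(1 - norm y) + 1"
  have b1: "(N + 2)/r^2 > 0" "1/(1 - norm y) > 0" using r ny by (simp_all add: N_def)
  have \<beta>0: "\<beta> > 0" using b1 unfolding \<beta>_def by linarith
  have \<beta>2: "N + 2 \<le> 2*\<beta>*r^2"
  proof -
    have "(N + 2)/r^2 \<le> \<beta>" using b1 by (simp add: \<beta>_def)
    hence "N + 2 \<le> \<beta> * r^2" using r by (simp add: divide_le_eq)
    thus ?thesis using \<beta>0 r b1 by (simp add: N_def)
  qed
  have \<beta>3: "1 \<le> \<beta>*(1 - norm y)"
  proof -
    have "1/(1 - norm y) \<le> \<beta>" using b1 by (simp add: \<beta>_def)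
    thus ?thesis using ny by (simp add: divide_le_eq mult.commute)
  qed
  have bar: "m * (x$k * exp(-\<beta> * norm(x - y)^2)) \<le> w x"
    if "norm x \<le> 1" "0 \<le> x$k" "r \<le> dist y x" for x
    by (rule stepB[OF U CU C2 lap neu zero ny yk r(1) cb m \<beta>0 \<beta>2[unfolded N_def] \<beta>3 that])
  show ?thesis
  proof
    show "\<forall>x\<in>Bplus k. w x > 0"
    proof
      fix x assume x: "x \<in> Bplus k"
      show "w x > 0"
      proof (cases "dist y x \<le> r")
        case True thus ?thesis using cb[OF True] m by simp
      next
        case False
        hence "m * (x$k * exp(-\<beta> * norm(x - y)^2)) \<le> w x" using x bar by (auto simp: Bplus_def)
        moreover have "m * (x$k * exp(-\<beta> * norm(x - y)^2)) > 0" using m x by (simp add: Bplus_def)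
        ultimately show ?thesis by simp
      qed
    qed
  next
    show "\<forall>x\<in>Sigma1 k. pd k w x > 0"
    proof
      fix p assume "p \<in> Sigma1 k"
      hence p: "norm p \<le> 1" "p$k = 0" by (auto simp: Sigma1_eq)
      have pU: "p \<in> U" using p CU by auto
      define d where "d = axis k (1::real) - p"
      define Dp where "Dp = (\<Sum>i\<in>UNIV. pd i w p * p$i)"
      have dp: "((\<lambda>t. w (p + t *\<^sub>R p)) has_real_derivative Dp) (at 0)"
        unfolding Dp_def by (rule slice_dir[OF C2 U pU])
      have z0: "w (p + t *\<^sub>R p) = 0" if "-1 < t" "t \<le> 0" for t
      proof -
        have eq: "p + t *\<^sub>R p = (1 + t) *\<^sub>R p" by (simp add: algebra_simps)
        have "norm (p + t *\<^sub>R p) \<le> 1"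
        proof -
          have "norm (p + t *\<^sub>R p) = (1 + t) * norm p" using that unfolding eq by simp
          also have "\<dots> \<le> 1 * 1" using that p by (intro mult_mono) auto
          finally show ?thesis by simp
        qed
        thus ?thesis using zero p unfolding eq by simp
      qed
      have "Dp \<le> 0"
        by (rule left_min[OF dp, of 1]) (use z0 zero[OF p] in auto)
      moreover have "- Dp \<le> 0"
        by (rule left_min[OF DERIV_minus[OF dp], of 1]) (use z0 zero[OF p] in auto)
      ultimately have Dp0: "Dp = 0" by simp
      define Gd where "Gd = (\<Sum>i\<in>UNIV. pd i w p * d$i)"
      have gd: "((\<lambda>t. w (p + t *\<^sub>R d)) has_real_derivative Gd) (at 0)"
        unfolding Gd_def by (rule slice_dir[OF C2 U pU])
      have "Gd = (\<Sum>i\<in>UNIV. pd i w p * axis k (1::real) $ i) - Dp"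
        by (simp add: Gd_def Dp_def d_def algebra_simps sum_subtractf)
      also have "(\<Sum>i\<in>UNIV. pd i w p * axis k (1::real) $ i) = pd k w p"
        by (simp add: axis_def if_distrib sum.delta cong: if_cong)
      finally have Gd_eq: "Gd = pd k w p" using Dp0 by simp
      define Q where "Q = norm (p - y)^2"
      define a where "a = (p - y) \<bullet> d"
      define b where "b = (norm d)^2"
      have dk: "d$k = 1" using p by (simp add: d_def)
      have hsl: "m * ((p + t *\<^sub>R d)$k * exp(-\<beta> * norm(p + t *\<^sub>R d - y)^2)) =
          m * ((0 + t * 1) * exp(-\<beta>*(Q + 2*a * t + b * t^2)))" for t
      proof -
        have "norm (p + t *\<^sub>R d - y)^2 = norm ((p - y) + t *\<^sub>R d)^2" by (simp add: algebra_simps)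
        also have "\<dots> = Q + 2*a * t + b * t^2" unfolding norm_line_sq by (simp add: Q_def a_def b_def)
        finally show ?thesis using p dk by simp
      qed
      have hd: "((\<lambda>t. m * ((p + t *\<^sub>R d)$k * exp(-\<beta> * norm(p + t *\<^sub>R d - y)^2))) has_real_derivative
          m * (exp(-\<beta>*(Q + 2*a*0 + b*0^2)) * (1 - \<beta>*(0 + 0*1)*(2*a + 2*b*0)))) (at 0)"
        unfolding hsl by (intro DERIV_cmult bar1d_1)
      define \<delta> where "\<delta> = min 1 ((y$k - r)/2)"
      have \<delta>: "\<delta> > 0" using r by (simp add: \<delta>_def)
      have "0 \<le> Gd - m * (exp(-\<beta>*(Q + 2*a*0 + b*0^2)) * (1 - \<beta>*(0 + 0*1)*(2*a + 2*b*0)))"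
      proof (rule right_min[OF DERIV_diff[OF gd hd] \<delta>])
        fix t :: real assume t: "0 \<le> t" "t < \<delta>"
        have eq: "p + t *\<^sub>R d = (1 - t) *\<^sub>R p + t *\<^sub>R axis k 1" by (simp add: d_def algebra_simps)
        have n1: "norm (p + t *\<^sub>R d) \<le> 1"
        proof -
          have "norm (p + t *\<^sub>R d) \<le> norm ((1 - t) *\<^sub>R p) + norm (t *\<^sub>R axis k (1::real))"
            unfolding eq by (rule norm_triangle_ineq)
          also have "\<dots> = (1 - t) * norm p + t" using t by (simp add: \<delta>_def)
          also have "\<dots> \<le> (1 - t) * 1 + t" using t p by (intro add_right_mono mult_left_mono) (auto simp: \<delta>_def)
          finally show ?thesis by simp
        qed
        have c1: "0 \<le> (p + t *\<^sub>R d)$k" using t dk p by simp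
        have "dist y p \<ge> y$k"
          using component_le_norm_cart[of "y - p" k] p by (simp add: dist_norm)
        moreover have "norm d \<le> 2"
          using norm_triangle_ineq4[of "axis k (1::real)" p] p by (simp add: d_def)
        hence "t * norm d \<le> t * 2" using t by (intro mult_left_mono) auto
        hence "norm (t *\<^sub>R d) \<le> 2 * t" using t by simp
        moreover have "dist y p \<le> dist y (p + t *\<^sub>R d) + norm (t *\<^sub>R d)"
          using dist_triangle[of y p "p + t *\<^sub>R d"] by (simp add: dist_norm)
        ultimately have "r \<le> dist y (p + t *\<^sub>R d)" using t by (simp add: \<delta>_def)
        from bar[OF n1 c1 this]
        show "w (p + 0 *\<^sub>R d) - m * ((p + 0 *\<^sub>R d)$k * exp(-\<beta> * norm(p + 0 *\<^sub>R d - y)^2))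
            \<le> w (p + t *\<^sub>R d) - m * ((p + t *\<^sub>R d)$k * exp(-\<beta> * norm(p + t *\<^sub>R d - y)^2))"
          using zero p by simp
      qed
      hence "m * exp(-\<beta>*Q) \<le> Gd" by simp
      moreover have "m * exp(-\<beta>*Q) > 0" using m by simp
      ultimately show "pd k w p > 0" using Gd_eq by simp
    qed
  qed
qed

end
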